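(* Under the same setting as follows: $S=(Z_1,\dots,Z_n)$ with $Z_i$ i.i.d. $\sim P_Z$, a learning algorithm $P_{W|S}$, a loss $\ell$ such that for every $w$ and every $\lambda\in\mathbb R$, $\mathbf E_{P_Z}[e^{\lambda(\ell(w,Z)-\mathbf E\ell(w,Z))}]\le e^{\lambda^2\sigma^2/2}$; $\beta>1$, $P_{SW}\ll P_SP_W$, $\mathcal H_\beta(S,W)<\infty$, $\delta\in(0,1)$. Then with probability at least $1-\delta$ over $S\sim P_S$, $$\mathbf E_{P_{W|S}}[\mathrm{gen}(S,W)]\le\sqrt{\frac{2\sigma^2}{n}}\left(\frac{\beta}{4(\beta-1)}+\log\frac{\big((\beta-1)\mathcal H_\beta(S,W)+1\big)^{1/\beta}}{\delta}\right).$$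
   Context: $\mathrm{gen}(S,W):=\mathbf E_{Z\sim P_Z}[\ell(W,Z)]-\frac1n\sum_{i=1}^n\ell(W,Z_i)$. $P_{SW}$ is the joint law of $(S,W)$ and $P_S,P_W$ its marginals. $\mathcal H_\beta(S,W):=\mathcal H_\beta(P_{SW}\Vert P_SP_W)$ where $\mathcal H_\beta(P\Vert Q):=\int\frac{(\mathrm dP/\mathrm dQ)^\beta-1}{\beta-1}\,\mathrm dQ$. Logarithms are natural. *)

theory Defs
  imports "HOL-Probability.Probability"
begin

definition sample_law :: "'z measure \<Rightarrow> nat \<Rightarrow> (nat \<Rightarrow> 'z) measure" where
  "sample_law PZ n = PiM {..<n} (\<lambda>_. PZ)"

definition joint_law :: "'s measure \<Rightarrow> 'w measure \<Rightarrow> ('s \<Rightarrow> 'w measure) \<Rightarrow> ('s \<times> 'w) measure" where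
  "joint_law PS MW K = PS \<bind> (\<lambda>s. K s \<bind> (\<lambda>w. return (PS \<Otimes>\<^sub>M MW) (s, w)))"

text \<open>Hellinger-type divergence H_beta(P || Q) = int ((dP/dQ)^beta - 1)/(beta - 1) dQ,
  for Q a probability measure, written as (int (dP/dQ)^beta dQ - 1)/(beta-1).\<close>
definition hellinger_integral :: "real \<Rightarrow> 'a measure \<Rightarrow> 'a measure \<Rightarrow> ennreal" where
  "hellinger_integral \<beta> P Q = (\<integral>\<^sup>+ x. ennreal (enn2real (RN_deriv Q P x) powr \<beta>) \<partial>Q)"

definition hellinger_div :: "real \<Rightarrow> 'a measure \<Rightarrow> 'a measure \<Rightarrow> real" where
  "hellinger_div \<beta> P Q = (enn2real (hellinger_integral \<beta> P Q) - 1) / (\<beta> - 1)"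

definition gen :: "'z measure \<Rightarrow> nat \<Rightarrow> ('w \<Rightarrow> 'z \<Rightarrow> real) \<Rightarrow> (nat \<Rightarrow> 'z) \<Rightarrow> 'w \<Rightarrow> real" where
  "gen PZ n loss s w = (\<integral>z. loss w z \<partial>PZ) - (1 / real n) * (\<Sum>i<n. loss w (s i))"

end

theory Submission
  imports Defs
begin

lemma joint_law_facts:
  fixes PS :: "'s measure" and MW :: "'w measure"
  assumes PS: "prob_space PS" and K: "K \<in> PS \<rightarrow>\<^sub>M prob_algebra MW"
  shows "sets (joint_law PS MW K) = sets (PS \<Otimes>\<^sub>M MW)"
    and "prob_space (joint_law PS MW K)"
    and "\<And>h. h \<in> borel_measurable (PS \<Otimes>\<^sub>M MW) \<Longrightarrow>
          (\<integral>\<^sup>+x. h x \<partial>joint_law PS MW K) = (\<integral>\<^sup>+s. \<integral>\<^sup>+w. h (s, w) \<partial>K s \<partial>PS)"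
proof -
  interpret PS: prob_space PS by fact
  have Ks: "\<And>s. s \<in> space PS \<Longrightarrow> sets (K s) = sets MW \<and> prob_space (K s)"
    using measurable_space[OF K] by (auto simp: space_prob_algebra)
  have Ksub[measurable]: "K \<in> PS \<rightarrow>\<^sub>M subprob_algebra MW" using measurable_prob_algebraD[OF K] .
  note return_measurable[measurable]
  have N[measurable]: "(\<lambda>s. K s \<bind> (\<lambda>w. return (PS \<Otimes>\<^sub>M MW) (s, w))) \<in> PS \<rightarrow>\<^sub>M subprob_algebra (PS \<Otimes>\<^sub>M MW)"
    by measurable
  have ne: "space PS \<noteq> {}" by (rule PS.not_empty)
  have neK: "\<And>s. s \<in> space PS \<Longrightarrow> space (K s) \<noteq> {}"
    using Ks prob_space.not_empty by blast
  show "sets (joint_law PS MW K) = sets (PS \<Otimes>\<^sub>M MW)"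
    unfolding joint_law_def
    by (rule sets_bind[OF sets_kernel[OF N] ne])
  show "prob_space (joint_law PS MW K)"
    unfolding joint_law_def
  proof (rule PS.prob_space_bind[OF _ N], rule AE_I2)
    fix s assume s: "s \<in> space PS"
    interpret Kp: prob_space "K s" using Ks[OF s] by blast
    have m: "(\<lambda>w. return (PS \<Otimes>\<^sub>M MW) (s, w)) \<in> K s \<rightarrow>\<^sub>M subprob_algebra (PS \<Otimes>\<^sub>M MW)"
      unfolding measurable_cong_sets[OF conjunct1[OF Ks[OF s]] refl]
      by (rule measurable_compose[OF measurable_Pair1'[OF s] return_measurable])
    show "prob_space (K s \<bind> (\<lambda>w. return (PS \<Otimes>\<^sub>M MW) (s, w)))"
      apply (rule Kp.prob_space_bind[OF _ m])
      apply (rule AE_I2) apply (rule prob_space_return)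
      using s sets_eq_imp_space_eq[OF conjunct1[OF Ks[OF s]]] by (simp add: space_pair_measure)
  qed
  fix h :: "'s \<times> 'w \<Rightarrow> ennreal" assume h[measurable]: "h \<in> borel_measurable (PS \<Otimes>\<^sub>M MW)"
  have "(\<integral>\<^sup>+x. h x \<partial>joint_law PS MW K) = (\<integral>\<^sup>+s. \<integral>\<^sup>+x. h x \<partial>(K s \<bind> (\<lambda>w. return (PS \<Otimes>\<^sub>M MW) (s, w))) \<partial>PS)"
    unfolding joint_law_def by (rule nn_integral_bind[OF h N])
  also have "\<dots> = (\<integral>\<^sup>+s. \<integral>\<^sup>+w. h (s, w) \<partial>K s \<partial>PS)"
  proof (rule nn_integral_cong)
    fix s assume s: "s \<in> space PS"
    have m: "(\<lambda>w. return (PS \<Otimes>\<^sub>M MW) (s, w)) \<in> K s \<rightarrow>\<^sub>M subprob_algebra (PS \<Otimes>\<^sub>M MW)"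
      unfolding measurable_cong_sets[OF conjunct1[OF Ks[OF s]] refl]
      by (rule measurable_compose[OF measurable_Pair1'[OF s] return_measurable])
    have "(\<integral>\<^sup>+x. h x \<partial>(K s \<bind> (\<lambda>w. return (PS \<Otimes>\<^sub>M MW) (s, w)))) = (\<integral>\<^sup>+w. \<integral>\<^sup>+x. h x \<partial>return (PS \<Otimes>\<^sub>M MW) (s, w) \<partial>K s)"
      by (rule nn_integral_bind[OF h m])
    also have "\<dots> = (\<integral>\<^sup>+w. h (s, w) \<partial>K s)"
      apply (rule nn_integral_cong)
      apply (rule nn_integral_return[OF _ h])
      using s sets_eq_imp_space_eq[OF conjunct1[OF Ks[OF s]]] by (simp add: space_pair_measure)
    finally show "(\<integral>\<^sup>+x. h x \<partial>(K s \<bind> (\<lambda>w. return (PS \<Otimes>\<^sub>M MW) (s, w)))) = (\<integral>\<^sup>+w. h (s, w) \<partial>K s)" .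
  qed
  finally show "(\<integral>\<^sup>+x. h x \<partial>joint_law PS MW K) = (\<integral>\<^sup>+s. \<integral>\<^sup>+w. h (s, w) \<partial>K s \<partial>PS)" .
qed

lemma young_ineq:
  fixes x y p q :: real
  assumes x: "x \<ge> 0" and y: "y \<ge> 0" and p: "p > 1" and q: "q = p / (p - 1)"
  shows "x * y \<le> x powr p / p + y powr q / q"
proof (cases "x = 0 \<or> y = 0")
  case True
  have "q > 0" using p q by simp
  then show ?thesis using True p by auto
next
  case False
  then have xp: "x > 0" and yp: "y > 0" using x y by auto
  have qe: "q = 1 + 1 / (p - 1)" using p q by (simp add: field_simps)
  have q1: "q > 1" unfolding qe using p by simp
  have iq: "1 / q = (p - 1) / p" using p q by simp
  have sum1: "1 / p + 1 / q = 1" unfolding iq using p by (simp add: field_simps)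
  have "x * y = exp (ln x + ln y)" using xp yp by (simp add: exp_add)
  also have "ln x + ln y = (1/p) * (p * ln x) + (1/q) * (q * ln y)" using p q1 by simp
  also have "exp ((1/p) * (p * ln x) + (1/q) * (q * ln y)) \<le> (1/p) * exp (p * ln x) + (1/q) * exp (q * ln y)"
  proof -
    have "exp ((1 - 1/q) *\<^sub>R (p * ln x) + (1/q) *\<^sub>R (q * ln y)) \<le> (1 - 1/q) * exp (p * ln x) + (1/q) * exp (q * ln y)"
      by (rule convex_onD[OF exp_convex]) (use q1 in auto)
    moreover have "1 - 1/q = 1/p" using sum1 by simp
    ultimately show ?thesis by simp
  qed
  also have "\<dots> = x powr p / p + y powr q / q" using xp yp by (simp add: powr_def mult.commute)
  finally show ?thesis .
qed

lemma sample_mgf: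
  fixes PZ :: "'z measure" and MW :: "'w measure" and loss :: "'w \<Rightarrow> 'z \<Rightarrow> real"
  assumes PZ: "prob_space PZ" and n: "n \<ge> 1" and w: "w \<in> space MW"
    and loss_meas: "(\<lambda>(w, z). loss w z) \<in> borel_measurable (MW \<Otimes>\<^sub>M PZ)"
    and subgauss: "\<And>w t. w \<in> space MW \<Longrightarrow>
        (\<integral>\<^sup>+ z. ennreal (exp (t * (loss w z - (\<integral>z'. loss w z' \<partial>PZ)))) \<partial>PZ)
          \<le> ennreal (exp (t\<^sup>2 * \<sigma>\<^sup>2 / 2))"
  shows "(\<integral>\<^sup>+ s. ennreal (exp (\<mu> * gen PZ n loss s w)) \<partial>sample_law PZ n)
           \<le> ennreal (exp (\<mu>\<^sup>2 * \<sigma>\<^sup>2 / (2 * real n)))"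
proof -
  interpret PZ: prob_space PZ by fact
  interpret P: product_prob_space "\<lambda>_. PZ" "{..<n}" by unfold_locales
  define c where "c = (\<integral>z. loss w z \<partial>PZ)"
  define t where "t = - \<mu> / real n"
  have lm[measurable]: "(\<lambda>z. loss w z) \<in> borel_measurable PZ"
    using measurable_Pair2[OF loss_meas w] by simp
  have nn: "real n > 0" using n by simp
  have eq: "\<And>s. exp (\<mu> * gen PZ n loss s w) = (\<Prod>i<n. exp (t * (loss w (s i) - c)))"
  proof -
    fix s
    have s1: "(\<Sum>i<n. t * (loss w (s i) - c)) = t * (\<Sum>i<n. loss w (s i)) - real n * t * c"
      by (simp add: right_diff_distrib sum_subtractf sum_distrib_left)
    have "\<mu> * gen PZ n loss s w = (\<Sum>i<n. t * (loss w (s i) - c))"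
      unfolding s1 using nn unfolding gen_def c_def[symmetric] t_def
      by (simp add: field_simps)
    then show "exp (\<mu> * gen PZ n loss s w) = (\<Prod>i<n. exp (t * (loss w (s i) - c)))"
      by (simp add: exp_sum)
  qed
  have "(\<integral>\<^sup>+ s. ennreal (exp (\<mu> * gen PZ n loss s w)) \<partial>sample_law PZ n)
       = (\<integral>\<^sup>+ s. (\<Prod>i\<in>{..<n}. ennreal (exp (t * (loss w (s i) - c)))) \<partial>PiM {..<n} (\<lambda>_. PZ))"
    unfolding sample_law_def eq by (simp add: prod_ennreal)
  also have "\<dots> = (\<Prod>i\<in>{..<n}. \<integral>\<^sup>+ z. ennreal (exp (t * (loss w z - c))) \<partial>PZ)"
    by (rule P.product_nn_integral_prod) auto
  also have "\<dots> \<le> (\<Prod>i\<in>{..<n}. ennreal (exp (t\<^sup>2 * \<sigma>\<^sup>2 / 2)))"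
    unfolding prod_constant by (rule power_mono) (use subgauss[OF w, of t] in \<open>auto simp: c_def\<close>)
  also have "\<dots> = ennreal (exp (t\<^sup>2 * \<sigma>\<^sup>2 / 2) ^ n)"
    by (simp add: ennreal_power)
  also have "exp (t\<^sup>2 * \<sigma>\<^sup>2 / 2) ^ n = exp (\<mu>\<^sup>2 * \<sigma>\<^sup>2 / (2 * real n))"
    using nn by (simp add: exp_of_nat_mult[symmetric] t_def power2_eq_square field_simps)
  finally show ?thesis .
qed

lemma main_lambda:
  fixes PZ :: "'z measure" and MW :: "'w measure" and n :: nat
    and K :: "(nat \<Rightarrow> 'z) \<Rightarrow> 'w measure"
    and loss :: "'w \<Rightarrow> 'z \<Rightarrow> real" and \<sigma> \<beta> \<delta> lam :: real
  assumes PS_def: "PS = sample_law PZ n"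
  and PSW_def: "PSW = joint_law PS MW K"
  and PW_def: "PW = distr PSW MW snd"
  assumes PZ: "prob_space PZ"
    and n: "n \<ge> 1"
    and K: "K \<in> PS \<rightarrow>\<^sub>M prob_algebra MW"
    and loss_meas: "(\<lambda>(w, z). loss w z) \<in> borel_measurable (MW \<Otimes>\<^sub>M PZ)"
    and subgauss_all: "\<forall>w \<in> space MW. \<forall>t.
        (\<integral>\<^sup>+ z. ennreal (exp (t * (loss w z - (\<integral>z'. loss w z' \<partial>PZ)))) \<partial>PZ)
          \<le> ennreal (exp (t\<^sup>2 * \<sigma>\<^sup>2 / 2))"
    and \<beta>: "\<beta> > 1"
    and ac: "absolutely_continuous (PS \<Otimes>\<^sub>M PW) PSW"
    and finite_H: "hellinger_integral \<beta> PSW (PS \<Otimes>\<^sub>M PW) < \<infinity>"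
    and \<delta>: "0 < \<delta>" "\<delta> < 1"
    and lam: "lam > 0"
  shows "1 \<le> enn2real (hellinger_integral \<beta> PSW (PS \<Otimes>\<^sub>M PW))"
    and "\<exists>A \<in> sets PS. measure PS A \<ge> 1 - \<delta> \<and>
           (\<forall>s \<in> A. lam * (\<integral>w. gen PZ n loss s w \<partial>(K s))
              \<le> ln ((enn2real (hellinger_integral \<beta> PSW (PS \<Otimes>\<^sub>M PW))) powr (1 / \<beta>) / \<delta>)
                 + \<beta> / (\<beta> - 1) * lam\<^sup>2 * \<sigma>\<^sup>2 / (2 * real n))"
proof -
  have subgauss: "\<And>w t. w \<in> space MW \<Longrightarrow>
        (\<integral>\<^sup>+ z. ennreal (exp (t * (loss w z - (\<integral>z'. loss w z' \<partial>PZ)))) \<partial>PZ)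
          \<le> ennreal (exp (t\<^sup>2 * \<sigma>\<^sup>2 / 2))" using subgauss_all by blast
  interpret PZ: prob_space PZ by fact
  have PSp: "prob_space PS" unfolding PS_def sample_law_def by (rule prob_space_PiM) (rule PZ)
  interpret PS: prob_space PS by fact
  note JL = joint_law_facts[OF PSp K]
  have setsPSW: "sets PSW = sets (PS \<Otimes>\<^sub>M MW)" unfolding PSW_def by (rule JL(1))
  have PSWp: "prob_space PSW" unfolding PSW_def by (rule JL(2))
  interpret PSW: prob_space PSW by fact
  have snd_m: "snd \<in> PSW \<rightarrow>\<^sub>M MW"
    using measurable_cong_sets[OF setsPSW refl] measurable_snd by blast
  have PWp: "prob_space PW" unfolding PW_def by (rule PSW.prob_space_distr[OF snd_m])
  interpret PW: prob_space PW by fact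
  have setsPW: "sets PW = sets MW" unfolding PW_def by simp
  have spacePW: "space PW = space MW" using sets_eq_imp_space_eq[OF setsPW] .
  interpret PP: pair_prob_space PS PW by unfold_locales
  define Q where "Q = PS \<Otimes>\<^sub>M PW"
  have setsQ: "sets Q = sets (PS \<Otimes>\<^sub>M MW)" unfolding Q_def by (rule sets_pair_measure_cong[OF refl setsPW])
  have setsPSWQ: "sets PSW = sets Q" using setsQ setsPSW by simp
  have Qp: "prob_space Q" unfolding Q_def by (rule prob_space_pair[OF PSp PWp])
  interpret Qp: prob_space Q by fact
  have acQ: "absolutely_continuous Q PSW" using ac unfolding Q_def .
  define r where "r = RN_deriv Q PSW"
  have r_m[measurable]: "r \<in> borel_measurable Q" unfolding r_def by simp
  have rfin: "AE x in Q. r x \<noteq> \<infinity>" unfolding r_def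
    by (rule Qp.RN_deriv_finite[OF prob_space_imp_sigma_finite[OF PSWp] acQ setsPSWQ])
  define g where "g x = enn2real (r x)" for x
  have g_m[measurable]: "g \<in> borel_measurable Q" unfolding g_def by simp
  have g_nn: "\<And>x. 0 \<le> g x" unfolding g_def by simp
  have RNint2: "(\<integral>\<^sup>+x. ennreal (h x) \<partial>PSW) = (\<integral>\<^sup>+x. ennreal (g x * h x) \<partial>Q)"
    if hm: "h \<in> borel_measurable Q" and hnn: "\<And>x. 0 \<le> h x" for h
  proof -
    have "(\<integral>\<^sup>+x. ennreal (h x) \<partial>PSW) = (\<integral>\<^sup>+x. r x * ennreal (h x) \<partial>Q)"
      unfolding r_def by (rule Qp.RN_deriv_nn_integral[OF acQ setsPSWQ]) (use hm in simp)
    also have "\<dots> = (\<integral>\<^sup>+x. ennreal (g x * h x) \<partial>Q)"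
    proof (rule nn_integral_cong_AE)
      show "AE x in Q. r x * ennreal (h x) = ennreal (g x * h x)"
        using rfin
      proof eventually_elim
        case (elim x)
        then have "r x = ennreal (g x)" unfolding g_def by (simp add: less_top)
        then show ?case using g_nn hnn by (simp add: ennreal_mult)
      qed
    qed
    finally show ?thesis .
  qed
  have int_g: "(\<integral>\<^sup>+x. ennreal (g x) \<partial>Q) = 1"
    using RNint2[of "\<lambda>_. 1"] by (simp add: PSW.emeasure_space_1)
  define Hh where "Hh = hellinger_integral \<beta> PSW Q"
  have Hh_eq: "Hh = (\<integral>\<^sup>+x. ennreal (g x powr \<beta>) \<partial>Q)"
    unfolding Hh_def hellinger_integral_def g_def r_def ..
  define A where "A = enn2real Hh"
  have HA: "Hh = ennreal A" unfolding A_def using finite_H unfolding Hh_def Q_def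
    by (simp add: less_top)
  have A_nn: "0 \<le> A" unfolding A_def by simp
  define \<beta>' where "\<beta>' = \<beta> / (\<beta> - 1)"
  have \<beta>'1: "\<beta>' > 1" unfolding \<beta>'_def using \<beta> by simp
  have inv\<beta>': "1 / \<beta>' = 1 - 1 / \<beta>" unfolding \<beta>'_def using \<beta> by (simp add: field_simps)
  have A1: "1 \<le> A"
  proof -
    have pw: "g x \<le> g x powr \<beta> / \<beta> + 1 / \<beta>'" for x
      using young_ineq[OF g_nn[of x] zero_le_one \<beta> \<beta>'_def] by simp
    have "ennreal 1 = (\<integral>\<^sup>+x. ennreal (g x) \<partial>Q)" using int_g by simp
    also have "\<dots> \<le> (\<integral>\<^sup>+x. ennreal (1 / \<beta>) * ennreal (g x powr \<beta>) + ennreal (1 / \<beta>') \<partial>Q)"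
      using pw \<beta> \<beta>'1 by (intro nn_integral_mono) (simp add: ennreal_mult[symmetric] ennreal_plus[symmetric] del: ennreal_plus)
    also have "\<dots> = ennreal (1 / \<beta>) * Hh + ennreal (1 / \<beta>')"
      unfolding Hh_eq by (subst nn_integral_add) (auto simp: nn_integral_cmult Qp.emeasure_space_1)
    also have "\<dots> = ennreal (A / \<beta> + 1 / \<beta>')"
    proof -
      have "ennreal (1 / \<beta>) * ennreal A = ennreal (A / \<beta>)"
        using ennreal_mult[of "1/\<beta>" A] \<beta> A_nn by simp
      moreover have "ennreal (A / \<beta>) + ennreal (1 / \<beta>') = ennreal (A / \<beta> + 1 / \<beta>')"
        using \<beta> \<beta>'1 A_nn by (intro ennreal_plus[symmetric]) auto
      ultimately show ?thesis unfolding HA by simp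
    qed
    finally have le: "ennreal 1 \<le> ennreal (A / \<beta> + 1 / \<beta>')" .
    have "0 \<le> A / \<beta> + 1 / \<beta>'" using A_nn \<beta> \<beta>'1 by simp
    with le have "1 \<le> A / \<beta> + 1 / \<beta>'" by (simp only: ennreal_le_iff)
    then show ?thesis unfolding inv\<beta>' using \<beta> by (simp add: field_simps)
  qed
  show "1 \<le> enn2real (hellinger_integral \<beta> PSW (PS \<Otimes>\<^sub>M PW))"
    using A1 unfolding A_def Hh_def Q_def .
  define u where "u = A powr (1 / \<beta>)"
  have u1: "1 \<le> u" unfolding u_def using A1 \<beta> by (intro ge_one_powr_ge_zero) auto
  have u_pos: "0 < u" using u1 by simp
  have A_pos: "0 < A" using A1 by simp
  define \<mu> where "\<mu> = \<beta>' * lam"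
  define Bb where "Bb = exp (\<mu>\<^sup>2 * \<sigma>\<^sup>2 / (2 * real n))"
  have Bb_pos: "0 < Bb" unfolding Bb_def by simp
  define v where "v = Bb powr (1 / \<beta>')"
  have v_pos: "0 < v" unfolding v_def using Bb_pos by simp
  define gn where "gn x = gen PZ n loss (fst x) (snd x)" for x
  have lc_m: "(\<lambda>w. \<integral>z. loss w z \<partial>PZ) \<in> borel_measurable MW"
    using PZ.borel_measurable_lebesgue_integral[of "\<lambda>w z. loss w z" MW] loss_meas by simp
  have li_m: "(\<lambda>x. loss (snd x) (fst x i)) \<in> borel_measurable (PS \<Otimes>\<^sub>M MW)" if i: "i \<in> {..<n}" for i
  proof -
    have "(\<lambda>x. (snd x, fst x i)) \<in> PS \<Otimes>\<^sub>M MW \<rightarrow>\<^sub>M MW \<Otimes>\<^sub>M PZ"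
    proof (rule measurable_Pair)
      show "snd \<in> PS \<Otimes>\<^sub>M MW \<rightarrow>\<^sub>M MW" by (rule measurable_snd)
      have "(\<lambda>s. s i) \<in> PS \<rightarrow>\<^sub>M PZ" unfolding PS_def sample_law_def
        by (rule measurable_component_singleton) (use i in simp)
      then show "(\<lambda>x. fst x i) \<in> PS \<Otimes>\<^sub>M MW \<rightarrow>\<^sub>M PZ"
        by (rule measurable_compose[OF measurable_fst])
    qed
    from measurable_compose[OF this loss_meas] show ?thesis by simp
  qed
  have gn_m1: "gn \<in> borel_measurable (PS \<Otimes>\<^sub>M MW)"
  proof -
    have "(\<lambda>x. \<integral>z. loss (snd x) z \<partial>PZ) \<in> borel_measurable (PS \<Otimes>\<^sub>M MW)"
      by (rule measurable_compose[OF measurable_snd lc_m])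
    moreover have "(\<lambda>x. \<Sum>i<n. loss (snd x) (fst x i)) \<in> borel_measurable (PS \<Otimes>\<^sub>M MW)"
      by (rule borel_measurable_sum) (rule li_m)
    ultimately show ?thesis unfolding gn_def gen_def by measurable
  qed
  have gn_mQ: "gn \<in> borel_measurable Q" using gn_m1 measurable_cong_sets[OF setsQ refl] by blast
  have gn_mPP: "gn \<in> borel_measurable (PS \<Otimes>\<^sub>M PW)" using gn_mQ unfolding Q_def .
  have expB: "(\<integral>\<^sup>+x. ennreal (exp (\<mu> * gn x)) \<partial>Q) \<le> ennreal Bb"
  proof -
    have m: "(\<lambda>x. ennreal (exp (\<mu> * gn x))) \<in> borel_measurable (PS \<Otimes>\<^sub>M PW)"
      using gn_mPP by measurable
    have "(\<integral>\<^sup>+x. ennreal (exp (\<mu> * gn x)) \<partial>Q) = (\<integral>\<^sup>+w. \<integral>\<^sup>+s. ennreal (exp (\<mu> * gn (s, w))) \<partial>PS \<partial>PW)"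
      unfolding Q_def by (rule PP.nn_integral_snd[symmetric, OF m])
    also have "\<dots> \<le> (\<integral>\<^sup>+w. ennreal Bb \<partial>PW)"
    proof (rule nn_integral_mono)
      fix w assume "w \<in> space PW"
      then have w: "w \<in> space MW" using spacePW by simp
      show "(\<integral>\<^sup>+s. ennreal (exp (\<mu> * gn (s, w))) \<partial>PS) \<le> ennreal Bb"
        using sample_mgf[OF PZ n w loss_meas subgauss, of \<mu>] unfolding gn_def Bb_def PS_def by simp
    qed
    also have "\<dots> = ennreal Bb" by (simp add: PW.emeasure_space_1)
    finally show ?thesis .
  qed
  have young_pw: "g x * exp (lam * gn x) \<le> (u * v / (A * \<beta>)) * g x powr \<beta> + (u * v / (Bb * \<beta>')) * exp (\<mu> * gn x)" for x
  proof -
    have y: "(g x / u) * (exp (lam * gn x) / v) \<le> (g x / u) powr \<beta> / \<beta> + (exp (lam * gn x) / v) powr \<beta>' / \<beta>'"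
      by (rule young_ineq[OF _ _ \<beta> \<beta>'_def]) (use g_nn u_pos v_pos in auto)
    have e1: "(g x / u) powr \<beta> = g x powr \<beta> / A"
    proof -
      have "u powr \<beta> = A" unfolding u_def powr_powr using \<beta> A_pos by simp
      then show ?thesis by (simp add: powr_divide)
    qed
    have e2: "(exp (lam * gn x) / v) powr \<beta>' = exp (\<mu> * gn x) / Bb"
    proof -
      have "v powr \<beta>' = Bb" unfolding v_def powr_powr using \<beta>'1 Bb_pos by simp
      moreover have "exp (lam * gn x) powr \<beta>' = exp (\<mu> * gn x)" unfolding exp_powr_real \<mu>_def
        by (simp add: algebra_simps)
      ultimately show ?thesis by (simp add: powr_divide)
    qed
    have "g x * exp (lam * gn x) = (u * v) * ((g x / u) * (exp (lam * gn x) / v))"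
      using u_pos v_pos by (simp add: field_simps)
    also have "\<dots> \<le> (u * v) * (g x powr \<beta> / A / \<beta> + exp (\<mu> * gn x) / Bb / \<beta>')"
      using y e1 e2 u_pos v_pos by (intro mult_left_mono) auto
    also have "\<dots> = (u * v / (A * \<beta>)) * g x powr \<beta> + (u * v / (Bb * \<beta>')) * exp (\<mu> * gn x)"
      by (simp add: field_simps)
    finally show ?thesis .
  qed
  have c1_nn: "0 \<le> u * v / (A * \<beta>)" using u_pos v_pos A_pos \<beta> by simp
  have c2_nn: "0 \<le> u * v / (Bb * \<beta>')" using u_pos v_pos Bb_pos \<beta>'1 by simp
  have int_bound: "(\<integral>\<^sup>+x. ennreal (exp (lam * gn x)) \<partial>PSW) \<le> ennreal (u * v)"
  proof -
    have m1: "(\<lambda>x. exp (lam * gn x)) \<in> borel_measurable Q" using gn_mQ by measurable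
    have "(\<integral>\<^sup>+x. ennreal (exp (lam * gn x)) \<partial>PSW) = (\<integral>\<^sup>+x. ennreal (g x * exp (lam * gn x)) \<partial>Q)"
      by (rule RNint2[OF m1]) simp
    also have "\<dots> \<le> (\<integral>\<^sup>+x. ennreal (u * v / (A * \<beta>)) * ennreal (g x powr \<beta>)
                          + ennreal (u * v / (Bb * \<beta>')) * ennreal (exp (\<mu> * gn x)) \<partial>Q)"
    proof (rule nn_integral_mono)
      fix x
      have "ennreal (g x * exp (lam * gn x)) \<le> ennreal ((u * v / (A * \<beta>)) * g x powr \<beta> + (u * v / (Bb * \<beta>')) * exp (\<mu> * gn x))"
        using young_pw[of x] by (rule ennreal_leI)
      also have "\<dots> = ennreal (u * v / (A * \<beta>)) * ennreal (g x powr \<beta>)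
                          + ennreal (u * v / (Bb * \<beta>')) * ennreal (exp (\<mu> * gn x))"
        by (simp only: ennreal_plus[OF mult_nonneg_nonneg[OF c1_nn powr_ge_zero] mult_nonneg_nonneg[OF c2_nn exp_ge_zero]]
              ennreal_mult[OF c1_nn powr_ge_zero] ennreal_mult[OF c2_nn exp_ge_zero])
      finally show "ennreal (g x * exp (lam * gn x)) \<le> ennreal (u * v / (A * \<beta>)) * ennreal (g x powr \<beta>)
                          + ennreal (u * v / (Bb * \<beta>')) * ennreal (exp (\<mu> * gn x))" .
    qed
    also have "\<dots> = ennreal (u * v / (A * \<beta>)) * Hh + ennreal (u * v / (Bb * \<beta>')) * (\<integral>\<^sup>+x. ennreal (exp (\<mu> * gn x)) \<partial>Q)"
      unfolding Hh_eq using gn_mQ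
      by (subst nn_integral_add) (auto simp: nn_integral_cmult)
    also have "\<dots> \<le> ennreal (u * v / (A * \<beta>)) * ennreal A + ennreal (u * v / (Bb * \<beta>')) * ennreal Bb"
      unfolding HA by (intro add_mono mult_left_mono expB) auto
    also have "\<dots> = ennreal (u * v / \<beta> + u * v / \<beta>')"
    proof -
      have "ennreal (u * v / (A * \<beta>)) * ennreal A = ennreal (u * v / \<beta>)"
        using ennreal_mult[OF c1_nn, of A] A_pos by simp
      moreover have "ennreal (u * v / (Bb * \<beta>')) * ennreal Bb = ennreal (u * v / \<beta>')"
        using ennreal_mult[OF c2_nn, of Bb] Bb_pos by simp
      moreover have "ennreal (u * v / \<beta>) + ennreal (u * v / \<beta>') = ennreal (u * v / \<beta> + u * v / \<beta>')"
        using u_pos v_pos \<beta> \<beta>'1 by (intro ennreal_plus[symmetric]) auto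
      ultimately show ?thesis by simp
    qed
    also have "u * v / \<beta> + u * v / \<beta>' = u * v"
    proof -
      have "u * v / \<beta> + u * v / \<beta>' = u * v * (1 / \<beta> + 1 / \<beta>')" by (simp add: field_simps)
      also have "1 / \<beta> + 1 / \<beta>' = 1" using inv\<beta>' by simp
      finally show ?thesis by simp
    qed
    finally show ?thesis .
  qed
  define G where "G s = (\<integral>\<^sup>+w. ennreal (exp (lam * gen PZ n loss s w)) \<partial>K s)" for s
  have Ksub: "K \<in> PS \<rightarrow>\<^sub>M subprob_algebra MW" using measurable_prob_algebraD[OF K] .
  have Ks: "\<And>s. s \<in> space PS \<Longrightarrow> sets (K s) = sets MW \<and> prob_space (K s)"
    using measurable_space[OF K] by (auto simp: space_prob_algebra)
  have hm: "(\<lambda>(s, w). ennreal (exp (lam * gen PZ n loss s w))) \<in> borel_measurable (PS \<Otimes>\<^sub>M MW)"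
  proof -
    have "(\<lambda>x. ennreal (exp (lam * gn x))) \<in> borel_measurable (PS \<Otimes>\<^sub>M MW)" using gn_m1 by measurable
    then show ?thesis unfolding gn_def by (simp add: case_prod_beta')
  qed
  have G_m[measurable]: "G \<in> borel_measurable PS"
    unfolding G_def by (rule nn_integral_measurable_subprob_algebra2[OF hm Ksub])
  have intG: "(\<integral>\<^sup>+s. G s \<partial>PS) \<le> ennreal (u * v)"
  proof -
    have m: "(\<lambda>x. ennreal (exp (lam * gn x))) \<in> borel_measurable (PS \<Otimes>\<^sub>M MW)" using gn_m1 by measurable
    have "(\<integral>\<^sup>+x. ennreal (exp (lam * gn x)) \<partial>PSW) = (\<integral>\<^sup>+s. G s \<partial>PS)"
    proof -
      have "(\<integral>\<^sup>+x. ennreal (exp (lam * gn x)) \<partial>PSW) = (\<integral>\<^sup>+s. \<integral>\<^sup>+w. ennreal (exp (lam * gn (s, w))) \<partial>K s \<partial>PS)"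
        unfolding PSW_def by (rule JL(3)[OF m])
      also have "\<dots> = (\<integral>\<^sup>+s. G s \<partial>PS)" unfolding G_def gn_def by simp
      finally show ?thesis .
    qed
    then show ?thesis using int_bound by simp
  qed
  define c where "c = u * v / \<delta>"
  have c_pos: "0 < c" unfolding c_def using u_pos v_pos \<delta> by simp
  define Aset where "Aset = {s \<in> space PS. G s \<le> ennreal c}"
  have Aset_m: "Aset \<in> sets PS" unfolding Aset_def by measurable
  have sub: "space PS - Aset \<subseteq> {s \<in> space PS. 1 \<le> ennreal (1 / c) * G s}"
  proof
    fix s assume s: "s \<in> space PS - Aset"
    then have "ennreal c \<le> G s" unfolding Aset_def by auto
    then have "ennreal (1 / c) * ennreal c \<le> ennreal (1 / c) * G s" by (rule mult_left_mono) simp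
    moreover have "ennreal (1 / c) * ennreal c = 1"
      using c_pos by (simp add: ennreal_mult[symmetric])
    ultimately show "s \<in> {s \<in> space PS. 1 \<le> ennreal (1 / c) * G s}" using s by auto
  qed
  have "emeasure PS (space PS - Aset) \<le> emeasure PS {s \<in> space PS. 1 \<le> ennreal (1 / c) * G s}"
    by (rule emeasure_mono[OF sub]) measurable
  also have "\<dots> \<le> ennreal (1 / c) * (\<integral>\<^sup>+s. G s * indicator (space PS) s \<partial>PS)"
    by (rule nn_integral_Markov_inequality) auto
  also have "(\<integral>\<^sup>+s. G s * indicator (space PS) s \<partial>PS) = (\<integral>\<^sup>+s. G s \<partial>PS)"
    by (rule nn_integral_cong) simp
  also have "ennreal (1 / c) * (\<integral>\<^sup>+s. G s \<partial>PS) \<le> ennreal (1 / c) * ennreal (u * v)"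
    by (rule mult_left_mono[OF intG]) simp
  also have "\<dots> = ennreal \<delta>"
    using c_pos u_pos v_pos \<delta> unfolding c_def by (simp add: ennreal_mult[symmetric])
  finally have "emeasure PS (space PS - Aset) \<le> ennreal \<delta>" .
  then have mc: "measure PS (space PS - Aset) \<le> \<delta>"
    using \<delta> by (simp add: PS.emeasure_eq_measure)
  have measA: "measure PS Aset \<ge> 1 - \<delta>"
    using PS.prob_compl[OF Aset_m] mc by simp
  define R where "R = ln (u / \<delta>) + \<beta> / (\<beta> - 1) * lam\<^sup>2 * \<sigma>\<^sup>2 / (2 * real n)"
  have lnc: "ln c = R"
  proof -
    have "ln c = ln (u / \<delta>) + ln v" unfolding c_def using u_pos v_pos \<delta>
    proof -
      have e: "(u / \<delta>) * v = u * v / \<delta>" by simp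
      have "ln ((u / \<delta>) * v) = ln (u / \<delta>) + ln v" using u_pos v_pos \<delta> by (intro ln_mult_pos) auto
      then show "ln (u * v / \<delta>) = ln (u / \<delta>) + ln v" unfolding e .
    qed
    also have "ln v = (1 / \<beta>') * (\<mu>\<^sup>2 * \<sigma>\<^sup>2 / (2 * real n))" unfolding v_def Bb_def by simp
    also have "\<dots> = \<beta>' * lam\<^sup>2 * \<sigma>\<^sup>2 / (2 * real n)"
      using \<beta>'1 unfolding \<mu>_def by (simp add: power2_eq_square field_simps)
    finally show ?thesis unfolding R_def \<beta>'_def .
  qed
  have R_nn: "0 \<le> R"
  proof -
    have "1 < u / \<delta>" using u1 \<delta> by (simp add: field_simps)
    then have "0 < ln (u / \<delta>)" by simp
    moreover have "0 \<le> \<beta> / (\<beta> - 1) * lam\<^sup>2 * \<sigma>\<^sup>2 / (2 * real n)" using \<beta> by simp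
    ultimately show ?thesis unfolding R_def by simp
  qed
  have bound: "lam * (\<integral>w. gen PZ n loss s w \<partial>(K s)) \<le> R" if s: "s \<in> Aset" for s
  proof -
    have sS: "s \<in> space PS" and Gs: "G s \<le> ennreal c" using s unfolding Aset_def by auto
    interpret Kp: prob_space "K s" using Ks[OF sS] by blast
    have gs_m: "(\<lambda>w. gen PZ n loss s w) \<in> borel_measurable (K s)"
    proof -
      have "(\<lambda>w. gn (s, w)) \<in> borel_measurable MW"
        by (rule measurable_compose[OF measurable_Pair1'[OF sS] gn_m1])
      then have "gen PZ n loss s \<in> borel_measurable MW" unfolding gn_def by simp
      then show ?thesis unfolding measurable_cong_sets[OF conjunct1[OF Ks[OF sS]] refl] by simp
    qed
    have e_m: "(\<lambda>w. exp (lam * gen PZ n loss s w)) \<in> borel_measurable (K s)" using gs_m by measurable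
    have e_int: "integrable (K s) (\<lambda>w. exp (lam * gen PZ n loss s w))"
      unfolding integrable_iff_bounded using e_m Gs unfolding G_def
      by (auto simp: top.not_eq_extremum intro: le_less_trans)
    have e_le: "(\<integral>w. exp (lam * gen PZ n loss s w) \<partial>K s) \<le> c"
    proof -
      have "(\<integral>w. exp (lam * gen PZ n loss s w) \<partial>K s) = enn2real (G s)"
        unfolding G_def by (rule integral_eq_nn_integral[OF e_m]) simp
      also have "\<dots> \<le> enn2real (ennreal c)" by (rule enn2real_mono[OF Gs]) simp
      finally show ?thesis using c_pos by simp
    qed
    show ?thesis
    proof (cases "integrable (K s) (\<lambda>w. gen PZ n loss s w)")
      case True
      have "exp (\<integral>w. lam * gen PZ n loss s w \<partial>K s) \<le> (\<integral>w. exp (lam * gen PZ n loss s w) \<partial>K s)"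
        by (rule Kp.jensens_inequality[where I=UNIV]) (use True e_int exp_convex in auto)
      then have "exp (lam * (\<integral>w. gen PZ n loss s w \<partial>K s)) \<le> c" using e_le by simp
      then have "ln (exp (lam * (\<integral>w. gen PZ n loss s w \<partial>K s))) \<le> ln c"
        using c_pos by (subst ln_le_cancel_iff) auto
      then show ?thesis using lnc by simp
    next
      case False
      then show ?thesis using R_nn by (simp add: not_integrable_integral_eq)
    qed
  qed
  show "\<exists>A \<in> sets PS. measure PS A \<ge> 1 - \<delta> \<and>
           (\<forall>s \<in> A. lam * (\<integral>w. gen PZ n loss s w \<partial>(K s))
              \<le> ln ((enn2real (hellinger_integral \<beta> PSW (PS \<Otimes>\<^sub>M PW))) powr (1 / \<beta>) / \<delta>)
                 + \<beta> / (\<beta> - 1) * lam\<^sup>2 * \<sigma>\<^sup>2 / (2 * real n))"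
    using Aset_m measA bound unfolding R_def u_def A_def Hh_def Q_def by blast
qed

theorem mainTheorem11:
  fixes PZ :: "'z measure" and MW :: "'w measure" and n :: nat
    and K :: "(nat \<Rightarrow> 'z) \<Rightarrow> 'w measure"
    and loss :: "'w \<Rightarrow> 'z \<Rightarrow> real" and \<sigma> \<beta> \<delta> :: real
  defines "PS \<equiv> sample_law PZ n"
  defines "PSW \<equiv> joint_law PS MW K"
  defines "PW \<equiv> distr PSW MW snd"
  assumes PZ: "prob_space PZ"
    and n: "n \<ge> 1"
    and K: "K \<in> PS \<rightarrow>\<^sub>M prob_algebra MW"
    and loss_meas: "(\<lambda>(w, z). loss w z) \<in> borel_measurable (MW \<Otimes>\<^sub>M PZ)"
    and subgauss: "\<And>w t. w \<in> space MW \<Longrightarrow>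
        (\<integral>\<^sup>+ z. ennreal (exp (t * (loss w z - (\<integral>z'. loss w z' \<partial>PZ)))) \<partial>PZ)
          \<le> ennreal (exp (t\<^sup>2 * \<sigma>\<^sup>2 / 2))"
    and \<beta>: "\<beta> > 1"
    and ac: "absolutely_continuous (PS \<Otimes>\<^sub>M PW) PSW"
    and finite_H: "hellinger_integral \<beta> PSW (PS \<Otimes>\<^sub>M PW) < \<infinity>"
    and \<delta>: "0 < \<delta>" "\<delta> < 1"
  shows "\<exists>A \<in> sets PS. measure PS A \<ge> 1 - \<delta> \<and>
           (\<forall>s \<in> A. (\<integral>w. gen PZ n loss s w \<partial>(K s))
              \<le> sqrt (2 * \<sigma>\<^sup>2 / real n) *
                 (\<beta> / (4 * (\<beta> - 1)) +
                  ln ((((\<beta> - 1) * hellinger_div \<beta> PSW (PS \<Otimes>\<^sub>M PW) + 1) powr (1 / \<beta>)) / \<delta>)))"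
proof -
  have PS_eq: "PS = sample_law PZ n" using PS_def by simp
  have PSW_eq: "PSW = joint_law PS MW K" using PSW_def by simp
  have PW_eq: "PW = distr PSW MW snd" using PW_def by simp
  have sg: "\<forall>w \<in> space MW. \<forall>t.
        (\<integral>\<^sup>+ z. ennreal (exp (t * (loss w z - (\<integral>z'. loss w z' \<partial>PZ)))) \<partial>PZ)
          \<le> ennreal (exp (t\<^sup>2 * \<sigma>\<^sup>2 / 2))" using subgauss by blast
  note mainl = main_lambda[where \<sigma>=\<sigma> and \<beta>=\<beta> and \<delta>=\<delta>, OF PS_eq PSW_eq PW_eq PZ n K loss_meas sg \<open>\<beta> > 1\<close> ac finite_H \<open>0 < \<delta>\<close> \<open>\<delta> < 1\<close>]
  define Hv where "Hv = enn2real (hellinger_integral \<beta> PSW (PS \<Otimes>\<^sub>M PW))"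
  have Hv1: "1 \<le> Hv" unfolding Hv_def using mainl(1)[of "1::real"] by simp
  have Hv_eq: "(\<beta> - 1) * hellinger_div \<beta> PSW (PS \<Otimes>\<^sub>M PW) + 1 = Hv"
    unfolding hellinger_div_def Hv_def using \<beta> by simp
  define u where "u = Hv powr (1 / \<beta>)"
  have u1: "1 \<le> u" unfolding u_def using Hv1 \<beta> by (intro ge_one_powr_ge_zero) auto
  define L where "L = ln (u / \<delta>)"
  have L_pos: "0 < L"
  proof -
    have "1 < u / \<delta>" using u1 \<delta> by (simp add: field_simps)
    then show ?thesis unfolding L_def by simp
  qed
  define E where "E s = (\<integral>w. gen PZ n loss s w \<partial>(K s))" for s
  have nn: "0 < real n" using n by simp
  have mainl2: "\<exists>A \<in> sets PS. measure PS A \<ge> 1 - \<delta> \<and>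
      (\<forall>s \<in> A. lam * E s \<le> L + \<beta> / (\<beta> - 1) * lam\<^sup>2 * \<sigma>\<^sup>2 / (2 * real n))" if "lam > 0" for lam
    using mainl(2)[OF that] unfolding E_def L_def u_def Hv_def .
  show ?thesis
  proof (cases "\<sigma> = 0")
    case False
    define a where "a = sqrt (2 * \<sigma>\<^sup>2 / real n)"
    have a_pos: "0 < a" unfolding a_def using False nn by simp
    have a2: "a\<^sup>2 = 2 * \<sigma>\<^sup>2 / real n" unfolding a_def using nn by simp
    obtain A where A: "A \<in> sets PS" "measure PS A \<ge> 1 - \<delta>"
      and bA: "\<And>s. s \<in> A \<Longrightarrow> (1 / a) * E s \<le> L + \<beta> / (\<beta> - 1) * (1 / a)\<^sup>2 * \<sigma>\<^sup>2 / (2 * real n)"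
      using mainl2[of "1 / a"] a_pos by auto
    have key: "(1 / a)\<^sup>2 * \<sigma>\<^sup>2 / (2 * real n) = 1 / 4"
    proof -
      have "\<sigma>\<^sup>2 / (2 * real n) = a\<^sup>2 / 4" unfolding a2 using nn by (simp add: field_simps)
      have "(1 / a)\<^sup>2 * \<sigma>\<^sup>2 / (2 * real n) = (1 / a)\<^sup>2 * (\<sigma>\<^sup>2 / (2 * real n))" by simp
      also have "\<dots> = (1 / a)\<^sup>2 * (a\<^sup>2 / 4)" unfolding \<open>\<sigma>\<^sup>2 / (2 * real n) = a\<^sup>2 / 4\<close> ..
      also have "\<dots> = 1 / 4" using a_pos by (simp add: power_divide)
      finally show ?thesis .
    qed
    show ?thesis
    proof (intro bexI[OF _ A(1)] conjI ballI)
      show "measure PS A \<ge> 1 - \<delta>" by (rule A(2))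
      fix s assume s: "s \<in> A"
      have "(1 / a) * E s \<le> L + \<beta> / (\<beta> - 1) / 4"
      proof -
        have "\<beta> / (\<beta> - 1) * (1 / a)\<^sup>2 * \<sigma>\<^sup>2 / (2 * real n) = \<beta> / (\<beta> - 1) * ((1 / a)\<^sup>2 * \<sigma>\<^sup>2 / (2 * real n))"
          by (simp only: mult.assoc times_divide_eq_right)
        also have "\<dots> = \<beta> / (\<beta> - 1) / 4" unfolding key by simp
        finally show ?thesis using bA[OF s] by simp
      qed
      then have "a * ((1 / a) * E s) \<le> a * (L + \<beta> / (\<beta> - 1) / 4)"
        using a_pos by (intro mult_left_mono) auto
      then have "E s \<le> a * (\<beta> / (4 * (\<beta> - 1)) + L)"
        using a_pos by (simp add: field_simps)
      then show "(\<integral>w. gen PZ n loss s w \<partial>(K s))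
              \<le> sqrt (2 * \<sigma>\<^sup>2 / real n) *
                 (\<beta> / (4 * (\<beta> - 1)) +
                  ln ((((\<beta> - 1) * hellinger_div \<beta> PSW (PS \<Otimes>\<^sub>M PW) + 1) powr (1 / \<beta>)) / \<delta>))"
        unfolding Hv_eq E_def a_def L_def u_def .
    qed
  next
    case True
    have "\<forall>k::nat. \<exists>A \<in> sets PS. measure PS A \<ge> 1 - \<delta> \<and> (\<forall>s \<in> A. real (Suc k) * E s \<le> L)"
      using mainl2 True by simp
    then obtain Af where Af: "\<And>k. Af k \<in> sets PS" "\<And>k. measure PS (Af k) \<ge> 1 - \<delta>"
      "\<And>k s. s \<in> Af k \<Longrightarrow> real (Suc k) * E s \<le> L"
      by metis
    interpret PS: prob_space PS unfolding PS_def sample_law_def by (rule prob_space_PiM) (rule PZ)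
    define B where "B j = (\<Union>k\<in>{j..}. Af k)" for j
    have B_m: "B j \<in> sets PS" for j
      unfolding B_def by (rule sets.countable_UN) (use Af(1) in auto)
    have B_dec: "decseq B" unfolding B_def decseq_def by (auto intro: order_trans)
    have B_meas: "measure PS (B j) \<ge> 1 - \<delta>" for j
    proof -
      have "measure PS (Af j) \<le> measure PS (B j)"
        by (rule PS.finite_measure_mono) (use B_m in \<open>auto simp: B_def\<close>)
      then show ?thesis using Af(2)[of j] by simp
    qed
    define C where "C = (\<Inter>j. B j)"
    have C_m: "C \<in> sets PS" unfolding C_def by (rule sets.countable_INT) (use B_m in auto)
    have "(\<lambda>j. measure PS (B j)) \<longlonglongrightarrow> measure PS C"
      unfolding C_def by (rule PS.finite_Lim_measure_decseq) (use B_m B_dec in auto)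
    then have C_meas: "1 - \<delta> \<le> measure PS C"
      by (rule LIMSEQ_le_const) (use B_meas in auto)
    have C_bound: "E s \<le> 0" if s: "s \<in> C" for s
    proof (rule ccontr)
      assume "\<not> E s \<le> 0"
      then have Ep: "0 < E s" by simp
      obtain j :: nat where j: "L / E s < real j" using reals_Archimedean2 by blast
      have "s \<in> B j" using s unfolding C_def by auto
      then obtain k where k: "k \<ge> j" "s \<in> Af k" unfolding B_def by auto
      have "real (Suc k) * E s \<le> L" by (rule Af(3)[OF k(2)])
      moreover have "real j * E s \<le> real k * E s" using k(1) Ep by (intro mult_right_mono) auto
      moreover have "L < real j * E s" using j Ep by (simp add: field_simps)
      moreover have "real (Suc k) * E s = real k * E s + E s" by (simp add: algebra_simps)
      ultimately show False using Ep by linarith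
    qed
    show ?thesis
    proof (intro bexI[OF _ C_m] conjI ballI)
      show "measure PS C \<ge> 1 - \<delta>" by (rule C_meas)
      fix s assume "s \<in> C"
      then show "(\<integral>w. gen PZ n loss s w \<partial>(K s))
              \<le> sqrt (2 * \<sigma>\<^sup>2 / real n) *
                 (\<beta> / (4 * (\<beta> - 1)) +
                  ln ((((\<beta> - 1) * hellinger_div \<beta> PSW (PS \<Otimes>\<^sub>M PW) + 1) powr (1 / \<beta>)) / \<delta>))"
        using C_bound True unfolding E_def by simp
    qed
  qed
qed

end
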